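(* A valued Abelian group $(G,+,p)$ is of class $\mathcal{O}_0$ if and only if it may be enlarged to a valued Abelian group $(\tilde G,+,\tilde p)$ such that the set of elements of finite order of $\tilde G$ is dense in $\tilde G$.
   Context: A value on an Abelian group $G$ is $p\colon G\to[0,\infty)$ with $p(x)=0\iff x=0$, $p(-x)=p(x)$, $p(x+y)\leqslant p(x)+p(y)$; it induces the metric $p(x-y)$. $(G,+,p)$ is of class $\mathcal{O}_0$ if $\lim_{n\to\infty}p(na)/n=0$ for every $a\in G$. Enlarging means $G\subseteq\tilde G$, the addition of $\tilde G$ extends that of $G$ and $\tilde p$ extends $p$. *)

theory Defs
  imports Complex_Main "HOL-Algebra.Group"
begin

text \<open>A value on an Abelian group (the group is the whole type 'a).\<close>
definition is_value :: "('a::ab_group_add \<Rightarrow> real) \<Rightarrow> bool" where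
  "is_value p \<longleftrightarrow> (\<forall>x. p x \<ge> 0) \<and> (\<forall>x. p x = 0 \<longleftrightarrow> x = 0) \<and>
     (\<forall>x. p (- x) = p x) \<and> (\<forall>x y. p (x + y) \<le> p x + p y)"

definition class_O0 :: "('a::ab_group_add \<Rightarrow> real) \<Rightarrow> bool" where
  "class_O0 p \<longleftrightarrow> is_value p \<and>
     (\<forall>a. (\<lambda>n::nat. p (\<Sum>i<n. a) / real n) \<longlonglongrightarrow> 0)"

definition is_group_value :: "('b, 'c) monoid_scheme \<Rightarrow> ('b \<Rightarrow> real) \<Rightarrow> bool" where
  "is_group_value H q \<longleftrightarrow>
     (\<forall>x\<in>carrier H. q x \<ge> 0) \<and> (\<forall>x\<in>carrier H. q x = 0 \<longleftrightarrow> x = \<one>\<^bsub>H\<^esub>) \<and>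
     (\<forall>x\<in>carrier H. q (inv\<^bsub>H\<^esub> x) = q x) \<and>
     (\<forall>x\<in>carrier H. \<forall>y\<in>carrier H. q (x \<otimes>\<^bsub>H\<^esub> y) \<le> q x + q y)"

text \<open>(H, q) is an enlargement of (G, p), G identified with its image under the
  injective, value-preserving homomorphism e.\<close>
definition is_enlargement ::
  "('a::ab_group_add \<Rightarrow> real) \<Rightarrow> ('b, 'c) monoid_scheme \<Rightarrow> ('b \<Rightarrow> real) \<Rightarrow> ('a \<Rightarrow> 'b) \<Rightarrow> bool" where
  "is_enlargement p H q e \<longleftrightarrow> comm_group H \<and> is_group_value H q \<and>
     (\<forall>x. e x \<in> carrier H) \<and> inj e \<and>
     (\<forall>x y. e (x + y) = e x \<otimes>\<^bsub>H\<^esub> e y) \<and> (\<forall>x. q (e x) = p x)"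

definition torsion_dense :: "('b, 'c) monoid_scheme \<Rightarrow> ('b \<Rightarrow> real) \<Rightarrow> bool" where
  "torsion_dense H q \<longleftrightarrow> (\<forall>x\<in>carrier H. \<forall>\<epsilon>>0. \<exists>t\<in>carrier H.
     (\<exists>n::nat. n \<ge> 1 \<and> t [^]\<^bsub>H\<^esub> n = \<one>\<^bsub>H\<^esub>) \<and> q (x \<otimes>\<^bsub>H\<^esub> inv\<^bsub>H\<^esub> t) < \<epsilon>)"

end

theory Submission
  imports Defs "HOL-Library.Countable" "HOL-Algebra.Coset" "HOL-Algebra.Multiplicative_Group"
begin

definition nmul :: "nat \<Rightarrow> 'a::ab_group_add \<Rightarrow> 'a" where
  "nmul n a = (\<Sum>i<n. a)"

lemma nmul_0[simp]: "nmul 0 a = 0" by (simp add: nmul_def)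
lemma nmul_Suc: "nmul (Suc n) a = a + nmul n a" by (simp add: nmul_def add.commute)
lemma nmul_add: "nmul (m + n) a = nmul m a + nmul n a"
  by (induction n) (simp_all add: nmul_Suc algebra_simps)
lemma nmul_plus: "nmul n (a + b) = nmul n a + nmul n b"
  by (simp add: nmul_def sum.distrib)
lemma nmul_minus: "nmul n (- a) = - nmul n a"
  by (simp add: nmul_def sum_negf)
lemma nmul_zero[simp]: "nmul n 0 = 0" by (simp add: nmul_def)
lemma nmul_mult: "nmul (m * n) a = nmul m (nmul n a)"
  by (induction m) (simp_all add: nmul_Suc nmul_add)

lemma value_basic:
  assumes "is_value p"
  shows "p x \<ge> 0" "p 0 = 0" "p (- x) = p x" "p (x + y) \<le> p x + p y"
    "p x = 0 \<longleftrightarrow> x = 0"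
  using assms unfolding is_value_def by auto

lemma value_nmul: "is_value p \<Longrightarrow> p (nmul n a) \<le> real n * p a"
proof (induction n)
  case 0 then show ?case by (simp add: value_basic)
next
  case (Suc n)
  then show ?case using value_basic(4)[OF Suc.prems, of a "nmul n a"]
    by (simp add: nmul_Suc algebra_simps)
qed

definition zmul :: "int \<Rightarrow> 'a::ab_group_add \<Rightarrow> 'a" where
  "zmul k a = nmul (nat k) a - nmul (nat (- k)) a"

lemma nmul_diff_eq:
  assumes "int m - int n = int m' - int n'"
  shows "nmul m a - nmul n a = nmul m' a - nmul n' a"
proof -
  have "m + n' = m' + n" using assms by linarith
  then have "nmul (m + n') a = nmul (m' + n) a" by simp
  then have "nmul m a + nmul n' a = nmul m' a + nmul n a" by (simp add: nmul_add)
  then show ?thesis by (simp add: algebra_simps)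
qed

lemma zmul_add: "zmul (k + l) a = zmul k a + zmul l a"
proof -
  have "zmul (k + l) a = nmul (nat k + nat l) a - nmul (nat (-k) + nat (-l)) a"
    unfolding zmul_def by (rule nmul_diff_eq) simp
  then show ?thesis by (simp add: zmul_def nmul_add algebra_simps)
qed

lemma zmul_0[simp]: "zmul 0 a = 0" by (simp add: zmul_def)
lemma zmul_1[simp]: "zmul 1 a = a" by (simp add: zmul_def nmul_def)
lemma zmul_zero[simp]: "zmul k 0 = 0" by (simp add: zmul_def)
lemma zmul_uminus: "zmul (- k) a = - zmul k a" by (simp add: zmul_def)
lemma zmul_nat: "zmul (int n * k) a = nmul n (zmul k a)"
  by (induction n) (simp_all add: nmul_Suc zmul_add algebra_simps)

lemma value_zmul: "is_value p \<Longrightarrow> p (zmul k a) \<le> \<bar>real_of_int k\<bar> * p a"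
proof (cases "k \<ge> 0")
  case True
  assume v: "is_value p"
  then show ?thesis using True value_nmul[OF v, of "nat k" a] by (simp add: zmul_def)
next
  case False
  assume v: "is_value p"
  then show ?thesis using False value_nmul[OF v, of "nat (-k)" a] value_basic(3)[OF v]
    by (simp add: zmul_def)
qed

definition G0 :: "('a::ab_group_add \<times> ('a \<Rightarrow> rat)) monoid" where
  "G0 = \<lparr>carrier = {x. finite {h. snd x h \<noteq> 0} \<and> snd x 0 = 0},
         mult = (\<lambda>x y. (fst x + fst y, \<lambda>h. snd x h + snd y h)),
         one = (0, \<lambda>h. 0)\<rparr>"

lemma G0_carrier: "x \<in> carrier G0 \<longleftrightarrow> finite {h. snd x h \<noteq> 0} \<and> snd x 0 = 0"
  by (simp add: G0_def)
lemma G0_mult: "x \<otimes>\<^bsub>G0\<^esub> y = (fst x + fst y, \<lambda>h. snd x h + snd y h)"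
  by (simp add: G0_def)
lemma G0_one: "\<one>\<^bsub>G0\<^esub> = (0, \<lambda>h. 0)"
  by (simp add: G0_def)

lemma fin_add: "finite {h. f h \<noteq> 0} \<Longrightarrow> finite {h. g h \<noteq> (0::'b::comm_monoid_add)} \<Longrightarrow>
   finite {h. f h + g h \<noteq> 0}"
  by (rule finite_subset[of _ "{h. f h \<noteq> 0} \<union> {h. g h \<noteq> 0}"]) auto

lemma comm_group_G0: "comm_group (G0 :: ('a::ab_group_add \<times> ('a \<Rightarrow> rat)) monoid)"
proof (rule comm_groupI)
  fix x y :: "'a \<times> ('a \<Rightarrow> rat)"
  assume "x \<in> carrier G0" "y \<in> carrier G0"
  then show "x \<otimes>\<^bsub>G0\<^esub> y \<in> carrier G0" by (simp add: G0_carrier G0_mult fin_add)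
next
  show "\<one>\<^bsub>G0\<^esub> \<in> carrier (G0 :: ('a::ab_group_add \<times> ('a \<Rightarrow> rat)) monoid)"
    by (simp add: G0_carrier G0_one)
next
  fix x y z :: "'a \<times> ('a \<Rightarrow> rat)"
  show "x \<otimes>\<^bsub>G0\<^esub> y \<otimes>\<^bsub>G0\<^esub> z = x \<otimes>\<^bsub>G0\<^esub> (y \<otimes>\<^bsub>G0\<^esub> z)"
    by (simp add: G0_mult algebra_simps)
  show "x \<otimes>\<^bsub>G0\<^esub> y = y \<otimes>\<^bsub>G0\<^esub> x" by (simp add: G0_mult algebra_simps)
  show "\<one>\<^bsub>G0\<^esub> \<otimes>\<^bsub>G0\<^esub> x = x" by (simp add: G0_mult G0_one)
next
  fix x :: "'a \<times> ('a \<Rightarrow> rat)"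
  assume "x \<in> carrier G0"
  then show "\<exists>y\<in>carrier G0. y \<otimes>\<^bsub>G0\<^esub> x = \<one>\<^bsub>G0\<^esub>"
    by (intro bexI[of _ "(- fst x, \<lambda>h. - snd x h)"]) (auto simp: G0_carrier G0_mult G0_one)
qed

interpretation G0: comm_group G0 by (rule comm_group_G0)

lemma G0_inv: "x \<in> carrier G0 \<Longrightarrow> inv\<^bsub>G0\<^esub> x = (- fst x, \<lambda>h. - snd x h)"
  by (rule G0.inv_equality) (auto simp: G0_carrier G0_mult G0_one)

lemma G0_pow: "x [^]\<^bsub>G0\<^esub> (n::nat) = (nmul n (fst x), \<lambda>h. of_nat n * snd x h)"
  by (induction n) (simp_all add: G0_mult G0_one nmul_Suc algebra_simps)

definition intv :: "('a \<Rightarrow> rat) \<Rightarrow> bool" where "intv f \<longleftrightarrow> (\<forall>h. f h \<in> \<int>)"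

definition L :: "('a::ab_group_add \<Rightarrow> rat) \<Rightarrow> 'a" where
  "L f = (\<Sum>h\<in>{h. f h \<noteq> 0}. zmul \<lfloor>f h\<rfloor> h)"

lemma L_superset: "finite S \<Longrightarrow> {h. f h \<noteq> 0} \<subseteq> S \<Longrightarrow> L f = (\<Sum>h\<in>S. zmul \<lfloor>f h\<rfloor> h)"
  unfolding L_def by (rule sum.mono_neutral_left) auto

lemma L_add:
  assumes "finite {h. f h \<noteq> 0}" "finite {h. g h \<noteq> 0}" "intv f"
  shows "L (\<lambda>h. f h + g h) = L f + L g"
proof -
  let ?S = "{h. f h \<noteq> 0} \<union> {h. g h \<noteq> 0}"
  have fl: "\<lfloor>f h + g h\<rfloor> = \<lfloor>f h\<rfloor> + \<lfloor>g h\<rfloor>" for h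
  proof -
    obtain m where "f h = of_int m" using assms(3) unfolding intv_def by (meson Ints_cases)
    then show ?thesis by simp
  qed
  have "L (\<lambda>h. f h + g h) = (\<Sum>h\<in>?S. zmul \<lfloor>f h + g h\<rfloor> h)"
    using assms by (intro L_superset) auto
  also have "\<dots> = (\<Sum>h\<in>?S. zmul \<lfloor>f h\<rfloor> h) + (\<Sum>h\<in>?S. zmul \<lfloor>g h\<rfloor> h)"
    by (simp add: fl zmul_add sum.distrib)
  also have "\<dots> = L f + L g"
  proof -
    have "L f = (\<Sum>h\<in>?S. zmul \<lfloor>f h\<rfloor> h)" using assms by (intro L_superset) auto
    moreover have "L g = (\<Sum>h\<in>?S. zmul \<lfloor>g h\<rfloor> h)" using assms by (intro L_superset) auto
    ultimately show ?thesis by simp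
  qed
  finally show ?thesis .
qed

lemma L_zero[simp]: "L (\<lambda>h. 0) = 0" by (simp add: L_def)

lemma L_uminus:
  assumes "intv f" shows "L (\<lambda>h. - f h) = - L f"
proof -
  have fl: "\<lfloor>- f h\<rfloor> = - \<lfloor>f h\<rfloor>" for h
  proof -
    obtain m where "f h = of_int m" using assms unfolding intv_def by (meson Ints_cases)
    then show ?thesis by simp
  qed
  show ?thesis by (simp add: L_def fl zmul_uminus sum_negf)
qed

lemma intv_add: "intv f \<Longrightarrow> intv g \<Longrightarrow> intv (\<lambda>h. f h + g h)"
  by (simp add: intv_def)
lemma intv_uminus: "intv f \<Longrightarrow> intv (\<lambda>h. - f h)"
  by (simp add: intv_def)

lemma L_nat:
  assumes "finite {h. f h \<noteq> 0}" "intv f"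
  shows "L (\<lambda>h. of_nat n * f h) = nmul n (L f)"
proof (induction n)
  case 0 then show ?case by simp
next
  case (Suc n)
  have "finite {h. of_nat n * f h \<noteq> 0}"
    by (rule finite_subset[OF _ assms(1)]) auto
  then have "L (\<lambda>h. f h + of_nat n * f h) = L f + L (\<lambda>h. of_nat n * f h)"
    using assms by (intro L_add) auto
  then show ?case using Suc by (simp add: nmul_Suc algebra_simps)
qed

definition K :: "('a::ab_group_add \<times> ('a \<Rightarrow> rat)) set" where
  "K = {x \<in> carrier G0. intv (snd x) \<and> fst x = - L (snd x)}"

lemma one_in_K: "\<one>\<^bsub>G0\<^esub> \<in> K"
  by (simp add: K_def G0_one G0_carrier intv_def)

lemma subgroup_K: "subgroup (K :: ('a::ab_group_add \<times> ('a \<Rightarrow> rat)) set) G0"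
proof (rule G0.subgroupI)
  show "K \<subseteq> carrier G0" by (auto simp: K_def)
  show "K \<noteq> {}" using one_in_K by blast
next
  fix a :: "'a \<times> ('a \<Rightarrow> rat)" assume a: "a \<in> K"
  then have c: "a \<in> carrier G0" by (simp add: K_def)
  have "finite {h. - snd a h \<noteq> 0}" using c by (simp add: G0_carrier)
  then show "inv\<^bsub>G0\<^esub> a \<in> K" using a c
    by (auto simp: K_def G0_inv G0_carrier intv_uminus L_uminus)
next
  fix a b :: "'a \<times> ('a \<Rightarrow> rat)" assume a: "a \<in> K" and b: "b \<in> K"
  then have "a \<in> carrier G0" "b \<in> carrier G0" by (auto simp: K_def)
  then show "a \<otimes>\<^bsub>G0\<^esub> b \<in> K" using a b
    by (auto simp: K_def G0_mult G0_carrier intv_add L_add fin_add)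
qed

interpretation Kn: normal K G0
  using G0.subgroup_imp_normal[OF subgroup_K] .

lemma value_sum: "is_value p \<Longrightarrow> p (\<Sum>i\<in>S. f i) \<le> (\<Sum>i\<in>S. p (f i))"
proof (induction S rule: infinite_finite_induct)
  case (infinite A) then show ?case by (simp add: value_basic)
next
  case empty then show ?case by (simp add: value_basic)
next
  case (insert x F)
  then show ?case using value_basic(4)[OF insert.prems, of "f x" "sum f F"] by simp
qed

locale vg = fixes p :: "'a::ab_group_add \<Rightarrow> real" assumes pv: "is_value p"
begin

definition Q0 :: "'a \<times> ('a \<Rightarrow> rat) \<Rightarrow> real" where
  "Q0 x = p (fst x) + (\<Sum>h\<in>{h. snd x h \<noteq> 0}. real_of_rat \<bar>snd x h\<bar> * p h)"

lemma Q0_superset: "finite S \<Longrightarrow> {h. snd x h \<noteq> 0} \<subseteq> S \<Longrightarrow>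
   Q0 x = p (fst x) + (\<Sum>h\<in>S. real_of_rat \<bar>snd x h\<bar> * p h)"
  unfolding Q0_def by (subst sum.mono_neutral_left[of S]) auto

lemma Q0_nonneg: "Q0 x \<ge> 0"
  unfolding Q0_def using value_basic(1)[OF pv]
  by (intro add_nonneg_nonneg sum_nonneg mult_nonneg_nonneg) auto

lemma Q0_term: "x \<in> carrier G0 \<Longrightarrow> real_of_rat \<bar>snd x h\<bar> * p h \<le> Q0 x"
proof (cases "snd x h = 0")
  case True then show ?thesis using Q0_nonneg by simp
next
  case False
  assume x: "x \<in> carrier G0"
  have "real_of_rat \<bar>snd x h\<bar> * p h \<le> (\<Sum>h\<in>{h. snd x h \<noteq> 0}. real_of_rat \<bar>snd x h\<bar> * p h)"
    using x False value_basic(1)[OF pv]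
    by (intro member_le_sum) (auto simp: G0_carrier)
  then show ?thesis using value_basic(1)[OF pv, of "fst x"] unfolding Q0_def by linarith
qed

lemma Q0_one: "Q0 \<one>\<^bsub>G0\<^esub> = 0"
  by (simp add: Q0_def G0_one value_basic[OF pv])

lemma Q0_inv: "x \<in> carrier G0 \<Longrightarrow> Q0 (inv\<^bsub>G0\<^esub> x) = Q0 x"
  by (simp add: Q0_def G0_inv value_basic[OF pv])

lemma Q0_mult:
  assumes x: "x \<in> carrier G0" and y: "y \<in> carrier G0"
  shows "Q0 (x \<otimes>\<^bsub>G0\<^esub> y) \<le> Q0 x + Q0 y"
proof -
  let ?S = "{h. snd x h \<noteq> 0} \<union> {h. snd y h \<noteq> 0}"
  have fS: "finite ?S" using x y by (auto simp: G0_carrier)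
  have "Q0 (x \<otimes>\<^bsub>G0\<^esub> y) = p (fst x + fst y) + (\<Sum>h\<in>?S. real_of_rat \<bar>snd x h + snd y h\<bar> * p h)"
    using fS by (subst Q0_superset[of ?S]) (auto simp: G0_mult)
  also have "\<dots> \<le> (p (fst x) + p (fst y)) +
      ((\<Sum>h\<in>?S. real_of_rat \<bar>snd x h\<bar> * p h) + (\<Sum>h\<in>?S. real_of_rat \<bar>snd y h\<bar> * p h))"
  proof (rule add_mono)
    show "p (fst x + fst y) \<le> p (fst x) + p (fst y)" by (rule value_basic(4)[OF pv])
    have "real_of_rat \<bar>snd x h + snd y h\<bar> * p h \<le>
        real_of_rat \<bar>snd x h\<bar> * p h + real_of_rat \<bar>snd y h\<bar> * p h" for h
    proof -
      have "real_of_rat \<bar>snd x h + snd y h\<bar> \<le> real_of_rat \<bar>snd x h\<bar> + real_of_rat \<bar>snd y h\<bar>"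
        by (metis abs_triangle_ineq of_rat_add of_rat_less_eq)
      then show ?thesis using value_basic(1)[OF pv, of h]
        by (metis distrib_right mult_right_mono)
    qed
    then show "(\<Sum>h\<in>?S. real_of_rat \<bar>snd x h + snd y h\<bar> * p h) \<le>
      (\<Sum>h\<in>?S. real_of_rat \<bar>snd x h\<bar> * p h) + (\<Sum>h\<in>?S. real_of_rat \<bar>snd y h\<bar> * p h)"
      by (simp add: sum.distrib[symmetric] sum_mono)
  qed
  also have "\<dots> = Q0 x + Q0 y"
    using fS by (simp add: Q0_superset[of ?S x] Q0_superset[of ?S y])
  finally show ?thesis .
qed

lemma K_bound:
  assumes k: "k \<in> K"
  shows "p (fst k) \<le> (\<Sum>h\<in>{h. snd k h \<noteq> 0}. real_of_rat \<bar>snd k h\<bar> * p h)"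
proof -
  let ?f = "snd k"
  have iv: "intv ?f" and fk: "fst k = - L ?f" using k unfolding K_def by simp_all
  have "p (fst k) = p (L ?f)" using fk value_basic(3)[OF pv] by simp
  also have "\<dots> \<le> (\<Sum>h\<in>{h. ?f h \<noteq> 0}. p (zmul \<lfloor>?f h\<rfloor> h))"
    unfolding L_def by (rule value_sum[OF pv])
  also have "\<dots> \<le> (\<Sum>h\<in>{h. ?f h \<noteq> 0}. real_of_rat \<bar>?f h\<bar> * p h)"
  proof (rule sum_mono)
    fix h
    obtain m where m: "?f h = of_int m" using iv unfolding intv_def by (meson Ints_cases)
    show "p (zmul \<lfloor>?f h\<rfloor> h) \<le> real_of_rat \<bar>?f h\<bar> * p h"
    proof -
      have "real_of_rat \<bar>rat_of_int m\<bar> = \<bar>real_of_int m\<bar>" by (metis abs_of_rat of_rat_of_int_eq)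
      then show ?thesis using value_zmul[OF pv, of "\<lfloor>?f h\<rfloor>" h] m by simp
    qed
  qed
  finally show ?thesis .
qed

lemma LB:
  assumes k: "k \<in> K"
  shows "p g \<le> Q0 (k \<otimes>\<^bsub>G0\<^esub> (g, \<lambda>h. 0))"
proof -
  have "p g \<le> p (fst k + g) + p (- fst k)"
    using value_basic(4)[OF pv, of "fst k + g" "- fst k"] by simp
  also have "\<dots> \<le> p (fst k + g) + (\<Sum>h\<in>{h. snd k h \<noteq> 0}. real_of_rat \<bar>snd k h\<bar> * p h)"
    using K_bound[OF k] value_basic(3)[OF pv] by simp
  also have "\<dots> = Q0 (k \<otimes>\<^bsub>G0\<^esub> (g, \<lambda>h. 0))"
    by (simp add: Q0_def G0_mult)
  finally show ?thesis .
qed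

definition q :: "('a \<times> ('a \<Rightarrow> rat)) set \<Rightarrow> real" where
  "q C = Inf (Q0 ` C)"

lemma q_le: "y \<in> C \<Longrightarrow> q C \<le> Q0 y"
  unfolding q_def by (rule cInf_lower) (auto intro: bdd_belowI[of _ 0] simp: Q0_nonneg)

lemma coset_elem: "y \<in> K #>\<^bsub>G0\<^esub> x \<longleftrightarrow> (\<exists>k\<in>K. y = k \<otimes>\<^bsub>G0\<^esub> x)"
  by (auto simp: r_coset_def)

lemma q_ge:
  assumes "\<And>k. k \<in> K \<Longrightarrow> c \<le> Q0 (k \<otimes>\<^bsub>G0\<^esub> x)"
  shows "c \<le> q (K #>\<^bsub>G0\<^esub> x)"
  unfolding q_def
proof (rule cInf_greatest)
  show "Q0 ` (K #>\<^bsub>G0\<^esub> x) \<noteq> {}" using one_in_K unfolding r_coset_def by blast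
  show "\<And>y. y \<in> Q0 ` (K #>\<^bsub>G0\<^esub> x) \<Longrightarrow> c \<le> y" using assms by (auto simp: r_coset_def)
qed

lemma q_nonneg: "x \<in> carrier G0 \<Longrightarrow> 0 \<le> q (K #>\<^bsub>G0\<^esub> x)"
  by (rule q_ge) (rule Q0_nonneg)

end

lemma frac_bound:
  fixes r :: rat
  assumes "r \<notin> \<int>"
  shows "min (frac r) (1 - frac r) \<le> \<bar>of_int m + r\<bar>" "0 < min (frac r) (1 - frac r)"
proof -
  have f0: "frac r > 0" using assms frac_ge_0[of r] frac_eq_0_iff[of r] by linarith
  have f1: "frac r < 1" by (rule frac_lt_1)
  have r: "r = of_int \<lfloor>r\<rfloor> + frac r" by (simp add: frac_def)
  show "0 < min (frac r) (1 - frac r)" using f0 f1 by simp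
  show "min (frac r) (1 - frac r) \<le> \<bar>of_int m + r\<bar>"
  proof (cases "m + \<lfloor>r\<rfloor> \<ge> 0")
    case True
    then have "(0::rat) \<le> of_int (m + \<lfloor>r\<rfloor>)" by linarith
    then show ?thesis using f0 f1 r by (simp add: abs_if) linarith?
  next
    case False
    then have "of_int (m + \<lfloor>r\<rfloor>) \<le> (-1::rat)" by linarith
    then show ?thesis using f0 f1 r by (simp add: abs_if) linarith?
  qed
qed

context vg begin

abbreviation HH where "HH \<equiv> G0 Mod K"

lemma HH_carrier: "carrier HH = (\<lambda>x. K #>\<^bsub>G0\<^esub> x) ` carrier G0"
  by (rule carrier_FactGroup)

lemma comm_group_HH: "comm_group HH"
  by (rule G0.abelian_FactGroup[OF subgroup_K])

lemma K_sub: "K \<subseteq> carrier G0" unfolding K_def by blast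

lemma K_coset_K: "x \<in> K \<Longrightarrow> K #>\<^bsub>G0\<^esub> x = K"
  by (rule Kn.rcos_const[OF G0.is_group])

lemma q_K: "q K = 0"
proof -
  have "q K \<le> Q0 \<one>\<^bsub>G0\<^esub>" using one_in_K by (rule q_le)
  moreover have "0 \<le> q (K #>\<^bsub>G0\<^esub> \<one>\<^bsub>G0\<^esub>)" by (rule q_nonneg) simp
  ultimately show ?thesis using K_coset_K[OF one_in_K] Q0_one by (metis order_antisym)
qed

lemma q_pos:
  assumes x: "x \<in> carrier G0" and nx: "x \<notin> K"
  shows "0 < q (K #>\<^bsub>G0\<^esub> x)"
proof (cases "intv (snd x)")
  case False
  then obtain h where h: "snd x h \<notin> \<int>" unfolding intv_def by blast
  have h0: "h \<noteq> 0" using h x by (auto simp: G0_carrier)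
  let ?c = "min (frac (snd x h)) (1 - frac (snd x h))"
  have ph: "p h > 0" using h0 value_basic(1,5)[OF pv, of h] by (metis less_eq_real_def)
  have cpos: "0 < real_of_rat ?c * p h" using frac_bound(2)[OF h] ph by simp
  have "real_of_rat ?c * p h \<le> q (K #>\<^bsub>G0\<^esub> x)"
  proof (rule q_ge)
    fix k :: "'a \<times> ('a \<Rightarrow> rat)" assume k: "k \<in> K"
    then have kc: "k \<in> carrier G0" using K_sub by blast
    have "snd k h \<in> \<int>" using k unfolding K_def intv_def by blast
    then obtain m where m: "snd k h = of_int m" by (auto elim: Ints_cases)
    have "?c \<le> \<bar>snd k h + snd x h\<bar>" using frac_bound(1)[OF h, of m] m by simp
    then have "real_of_rat ?c \<le> real_of_rat \<bar>snd k h + snd x h\<bar>" by (simp add: of_rat_less_eq)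
    then have "real_of_rat ?c * p h \<le> real_of_rat \<bar>snd (k \<otimes>\<^bsub>G0\<^esub> x) h\<bar> * p h"
      using ph by (simp add: G0_mult)
    also have "\<dots> \<le> Q0 (k \<otimes>\<^bsub>G0\<^esub> x)" by (rule Q0_term) (simp add: kc x)
    finally show "real_of_rat ?c * p h \<le> Q0 (k \<otimes>\<^bsub>G0\<^esub> x)" .
  qed
  then show ?thesis using cpos by linarith
next
  case True
  let ?f = "snd x"
  define k0 where "k0 = (L ?f, \<lambda>h. - ?f h)"
  have fin: "finite {h. ?f h \<noteq> 0}" "?f 0 = 0" using x by (auto simp: G0_carrier)
  have k0: "k0 \<in> K" using True fin unfolding K_def
    by (simp add: k0_def G0_carrier intv_uminus L_uminus)
  have y: "k0 \<otimes>\<^bsub>G0\<^esub> x = (L ?f + fst x, \<lambda>h. 0)" by (simp add: k0_def G0_mult)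
  have k0c: "k0 \<in> carrier G0" using k0 K_sub by blast
  have "K #>\<^bsub>G0\<^esub> x = (K #>\<^bsub>G0\<^esub> k0) #>\<^bsub>G0\<^esub> x" using K_coset_K[OF k0] by simp
  also have "\<dots> = K #>\<^bsub>G0\<^esub> (L ?f + fst x, \<lambda>h. 0)"
    using G0.coset_mult_assoc[OF K_sub k0c x] y by simp
  finally have eq: "K #>\<^bsub>G0\<^esub> x = K #>\<^bsub>G0\<^esub> (L ?f + fst x, \<lambda>h. 0)" .
  have "p (L ?f + fst x) \<le> q (K #>\<^bsub>G0\<^esub> x)"
    unfolding eq by (rule q_ge) (rule LB)
  moreover have "L ?f + fst x \<noteq> 0"
  proof
    assume "L ?f + fst x = 0"
    then have "fst x = - L ?f" by (simp add: eq_neg_iff_add_eq_0 add.commute)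
    then have "x \<in> K" using x True unfolding K_def by simp
    then show False using nx by blast
  qed
  ultimately show ?thesis using value_basic(1,5)[OF pv, of "L ?f + fst x"] by linarith
qed

lemma q_zero_iff:
  assumes x: "x \<in> carrier G0"
  shows "q (K #>\<^bsub>G0\<^esub> x) = 0 \<longleftrightarrow> K #>\<^bsub>G0\<^esub> x = K"
proof (cases "x \<in> K")
  case True then show ?thesis using K_coset_K[OF True] q_K by simp
next
  case False
  have "x \<in> K #>\<^bsub>G0\<^esub> x" by (rule G0.rcos_self[OF x subgroup_K])
  then have "K #>\<^bsub>G0\<^esub> x \<noteq> K" using False by blast
  then show ?thesis using q_pos[OF x False] by simp
qed

lemma q_inv_le:
  assumes x: "x \<in> carrier G0"
  shows "q (K #>\<^bsub>G0\<^esub> inv\<^bsub>G0\<^esub> x) \<le> q (K #>\<^bsub>G0\<^esub> x)"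
  unfolding q_def[of "K #>\<^bsub>G0\<^esub> x"]
proof (rule cInf_greatest)
  show "Q0 ` (K #>\<^bsub>G0\<^esub> x) \<noteq> {}" using G0.rcos_self[OF x subgroup_K] by blast
next
  fix z assume "z \<in> Q0 ` (K #>\<^bsub>G0\<^esub> x)"
  then obtain k where k: "k \<in> K" and z: "z = Q0 (k \<otimes>\<^bsub>G0\<^esub> x)"
    by (auto simp: r_coset_def)
  have kc: "k \<in> carrier G0" using k K_sub by blast
  have "inv\<^bsub>G0\<^esub> (k \<otimes>\<^bsub>G0\<^esub> x) = inv\<^bsub>G0\<^esub> k \<otimes>\<^bsub>G0\<^esub> inv\<^bsub>G0\<^esub> x"
    using kc x by (simp add: G0.inv_mult)
  moreover have "inv\<^bsub>G0\<^esub> k \<in> K" using k by (rule subgroup.m_inv_closed[OF subgroup_K])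
  ultimately have "inv\<^bsub>G0\<^esub> (k \<otimes>\<^bsub>G0\<^esub> x) \<in> K #>\<^bsub>G0\<^esub> inv\<^bsub>G0\<^esub> x"
    by (auto simp: r_coset_def)
  then have "q (K #>\<^bsub>G0\<^esub> inv\<^bsub>G0\<^esub> x) \<le> Q0 (inv\<^bsub>G0\<^esub> (k \<otimes>\<^bsub>G0\<^esub> x))" by (rule q_le)
  also have "\<dots> = z" using z kc x by (simp add: Q0_inv)
  finally show "q (K #>\<^bsub>G0\<^esub> inv\<^bsub>G0\<^esub> x) \<le> z" .
qed

lemma q_inv:
  assumes x: "x \<in> carrier G0"
  shows "q (K #>\<^bsub>G0\<^esub> inv\<^bsub>G0\<^esub> x) = q (K #>\<^bsub>G0\<^esub> x)"
  using q_inv_le[OF x] q_inv_le[of "inv\<^bsub>G0\<^esub> x"] x by simp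

lemma inf_add_bound:
  fixes f g :: "'b \<Rightarrow> real"
  assumes "A \<noteq> {}" "B \<noteq> {}" "\<And>a b. a \<in> A \<Longrightarrow> b \<in> B \<Longrightarrow> c \<le> f a + g b"
    "\<And>a. a \<in> A \<Longrightarrow> 0 \<le> f a" "\<And>b. b \<in> B \<Longrightarrow> 0 \<le> g b"
  shows "c \<le> Inf (f ` A) + Inf (g ` B)"
proof -
  have "c - Inf (g ` B) \<le> f a" if a: "a \<in> A" for a
  proof -
    have "c - f a \<le> Inf (g ` B)"
      using assms(2,3) a by (intro cInf_greatest) (auto simp: algebra_simps)
    then show ?thesis by linarith
  qed
  then have "c - Inf (g ` B) \<le> Inf (f ` A)" using assms(1) by (intro cInf_greatest) auto
  then show ?thesis by linarith
qed

lemma q_mult: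
  assumes x: "x \<in> carrier G0" and y: "y \<in> carrier G0"
  shows "q (K #>\<^bsub>G0\<^esub> (x \<otimes>\<^bsub>G0\<^esub> y)) \<le> q (K #>\<^bsub>G0\<^esub> x) + q (K #>\<^bsub>G0\<^esub> y)"
  unfolding q_def[of "K #>\<^bsub>G0\<^esub> x"] q_def[of "K #>\<^bsub>G0\<^esub> y"]
proof (rule inf_add_bound)
  show "K #>\<^bsub>G0\<^esub> x \<noteq> {}" using G0.rcos_self[OF x subgroup_K] by blast
  show "K #>\<^bsub>G0\<^esub> y \<noteq> {}" using G0.rcos_self[OF y subgroup_K] by blast
  show "\<And>a. 0 \<le> Q0 a" "\<And>a. 0 \<le> Q0 a" by (rule Q0_nonneg)+
next
  fix a b assume a: "a \<in> K #>\<^bsub>G0\<^esub> x" and b: "b \<in> K #>\<^bsub>G0\<^esub> y"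
  obtain k1 where k1: "k1 \<in> K" "a = k1 \<otimes>\<^bsub>G0\<^esub> x" using a by (auto simp: r_coset_def)
  obtain k2 where k2: "k2 \<in> K" "b = k2 \<otimes>\<^bsub>G0\<^esub> y" using b by (auto simp: r_coset_def)
  have c: "k1 \<in> carrier G0" "k2 \<in> carrier G0" using k1 k2 K_sub by auto
  have "a \<otimes>\<^bsub>G0\<^esub> b = (k1 \<otimes>\<^bsub>G0\<^esub> k2) \<otimes>\<^bsub>G0\<^esub> (x \<otimes>\<^bsub>G0\<^esub> y)"
    using k1 k2 c x y by (simp add: G0.m_ac)
  moreover have "k1 \<otimes>\<^bsub>G0\<^esub> k2 \<in> K" using k1 k2 subgroup.m_closed[OF subgroup_K] by blast
  ultimately have "a \<otimes>\<^bsub>G0\<^esub> b \<in> K #>\<^bsub>G0\<^esub> (x \<otimes>\<^bsub>G0\<^esub> y)" by (auto simp: r_coset_def)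
  then have "q (K #>\<^bsub>G0\<^esub> (x \<otimes>\<^bsub>G0\<^esub> y)) \<le> Q0 (a \<otimes>\<^bsub>G0\<^esub> b)" by (rule q_le)
  also have "\<dots> \<le> Q0 a + Q0 b"
    using k1 k2 c x y by (intro Q0_mult) auto
  finally show "q (K #>\<^bsub>G0\<^esub> (x \<otimes>\<^bsub>G0\<^esub> y)) \<le> Q0 a + Q0 b" .
qed

lemma HH_inv: "x \<in> carrier G0 \<Longrightarrow> inv\<^bsub>HH\<^esub> (K #>\<^bsub>G0\<^esub> x) = K #>\<^bsub>G0\<^esub> inv\<^bsub>G0\<^esub> x"
  using Kn.inv_FactGroup[of "K #>\<^bsub>G0\<^esub> x"] Kn.rcos_inv[of x] HH_carrier by auto

lemma HH_mult: "x \<in> carrier G0 \<Longrightarrow> y \<in> carrier G0 \<Longrightarrow>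
    (K #>\<^bsub>G0\<^esub> x) \<otimes>\<^bsub>HH\<^esub> (K #>\<^bsub>G0\<^esub> y) = K #>\<^bsub>G0\<^esub> (x \<otimes>\<^bsub>G0\<^esub> y)"
  by (simp add: Kn.rcos_sum)

lemma HH_one: "\<one>\<^bsub>HH\<^esub> = K" by simp

lemma HH_value: "is_group_value HH q"
proof -
  have m: "q ((K #>\<^bsub>G0\<^esub> x) <#>\<^bsub>G0\<^esub> (K #>\<^bsub>G0\<^esub> y)) \<le> q (K #>\<^bsub>G0\<^esub> x) + q (K #>\<^bsub>G0\<^esub> y)"
    if "x \<in> carrier G0" "y \<in> carrier G0" for x y
    using q_mult[OF that] Kn.rcos_sum[OF that] by simp
  show ?thesis
  unfolding is_group_value_def HH_carrier
  proof (intro conjI ballI)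
    fix C D :: "('a \<times> ('a \<Rightarrow> rat)) set" assume C: "C \<in> (\<lambda>x. K #>\<^bsub>G0\<^esub> x) ` carrier G0" and D: "D \<in> (\<lambda>x. K #>\<^bsub>G0\<^esub> x) ` carrier G0"
    then obtain x y where x: "x \<in> carrier G0" "C = K #>\<^bsub>G0\<^esub> x" and y: "y \<in> carrier G0" "D = K #>\<^bsub>G0\<^esub> y" by blast
    show "q (C \<otimes>\<^bsub>HH\<^esub> D) \<le> q C + q D" using m[OF x(1) y(1)] x y by simp
  next
    fix C :: "('a \<times> ('a \<Rightarrow> rat)) set" assume C: "C \<in> (\<lambda>x. K #>\<^bsub>G0\<^esub> x) ` carrier G0"
    then obtain x where x: "x \<in> carrier G0" "C = K #>\<^bsub>G0\<^esub> x" by blast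
    show "0 \<le> q C" using x q_nonneg by simp
    show "(q C = 0) = (C = \<one>\<^bsub>HH\<^esub>)" using x q_zero_iff by simp
    show "q (inv\<^bsub>HH\<^esub> C) = q C" using x HH_inv[OF x(1)] q_inv[OF x(1)] by simp
  qed
qed

end

lemma common_denom:
  fixes f :: "'b \<Rightarrow> rat"
  assumes "finite S"
  shows "\<exists>N>0. \<forall>h\<in>S. of_nat N * f h \<in> \<int>"
  using assms
proof (induction S rule: finite_induct)
  case empty then show ?case by (intro exI[of _ 1]) simp
next
  case (insert h S)
  then obtain N where N: "N > 0" "\<forall>h\<in>S. of_nat N * f h \<in> \<int>" by blast
  obtain a b where ab: "quotient_of (f h) = (a, b)" by (cases "quotient_of (f h)")
  have b: "b > 0" using quotient_of_denom_pos[OF ab] .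
  have fh: "f h = of_int a / of_int b" using quotient_of_div[OF ab] .
  define M where "M = N * nat b"
  have "M > 0" using N b by (simp add: M_def)
  moreover have "of_nat M * f h \<in> \<int>"
  proof -
    have "of_nat M * f h = of_nat N * of_int a" using b
      by (simp add: M_def fh field_simps)
    then show ?thesis by simp
  qed
  moreover have "of_nat M * f h' \<in> \<int>" if "h' \<in> S" for h'
  proof -
    have e: "rat_of_nat M = of_int b * of_nat N" using b by (simp add: M_def of_nat_mult)
    have eq: "of_nat M * f h' = of_int b * (of_nat N * f h')" by (simp add: e mult.assoc)
    have "of_nat N * f h' \<in> \<int>" using N that by blast
    then have "of_int b * (of_nat N * f h') \<in> \<int>" by (rule Ints_mult[OF Ints_of_int])
    then show ?thesis unfolding eq .
  qed
  ultimately show ?case by blast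
qed

context vg begin

definition emb :: "'a \<Rightarrow> ('a \<times> ('a \<Rightarrow> rat)) set" where
  "emb x = K #>\<^bsub>G0\<^esub> (x, \<lambda>h. 0)"

lemma emb_carrier: "(x, \<lambda>h. 0) \<in> carrier G0" by (simp add: G0_carrier)

lemma is_enl: "is_enlargement p HH q emb"
  unfolding is_enlargement_def
proof (intro conjI allI)
  show "comm_group HH" by (rule comm_group_HH)
  show "is_group_value HH q" by (rule HH_value)
  fix x y :: 'a
  show "emb x \<in> carrier HH" unfolding emb_def HH_carrier using emb_carrier by blast
  show "emb (x + y) = emb x \<otimes>\<^bsub>HH\<^esub> emb y"
    unfolding emb_def HH_mult[OF emb_carrier emb_carrier] by (simp add: G0_mult)
  show "q (emb x) = p x"
  proof (rule order_antisym)
    show "q (emb x) \<le> p x" unfolding emb_def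
      using q_le[OF G0.rcos_self[OF emb_carrier subgroup_K]] by (simp add: Q0_def)
    show "p x \<le> q (emb x)" unfolding emb_def by (rule q_ge) (rule LB)
  qed
next
  show "inj emb"
  proof (rule injI)
    fix x y :: 'a assume eq: "emb x = emb y"
    have "(x, \<lambda>h. 0) \<in> K #>\<^bsub>G0\<^esub> (y, \<lambda>h. 0)"
      using G0.rcos_self[OF emb_carrier subgroup_K, of x] eq unfolding emb_def by simp
    then have "(x, \<lambda>h. 0) \<otimes>\<^bsub>G0\<^esub> inv\<^bsub>G0\<^esub> (y, \<lambda>h::'a. 0::rat) \<in> K"
      by (rule subgroup.rcos_module_imp[OF subgroup_K G0.is_group emb_carrier])
    then have "(x - y, \<lambda>h::'a. 0::rat) \<in> K" by (simp add: G0_inv emb_carrier G0_mult)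
    then have "x - y = 0" unfolding K_def by simp
    then show "x = y" by simp
  qed
qed

lemma torsion_HH:
  assumes O0: "class_O0 p"
  shows "torsion_dense HH q"
  unfolding torsion_dense_def
proof (intro ballI allI impI)
  fix C :: "('a \<times> ('a \<Rightarrow> rat)) set" and \<epsilon> :: real
  assume C: "C \<in> carrier HH" and eps: "\<epsilon> > 0"
  then obtain x where x: "x \<in> carrier G0" "C = K #>\<^bsub>G0\<^esub> x" unfolding HH_carrier by blast
  let ?f = "snd x" let ?g = "fst x"
  have finf: "finite {h. ?f h \<noteq> 0}" using x by (simp add: G0_carrier)
  obtain N where N: "N > 0" "\<forall>h\<in>{h. ?f h \<noteq> 0}. of_nat N * ?f h \<in> \<int>"
    using common_denom[OF finf] by blast
  define F where "F = (\<lambda>h. of_nat N * ?f h)"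
  have ivF: "intv F" unfolding intv_def F_def
  proof
    fix h show "rat_of_nat N * snd x h \<in> \<int>" using N(2) by (cases "?f h = 0") auto
  qed
  have finF: "finite {h. F h \<noteq> 0}" by (rule finite_subset[OF _ finf]) (auto simp: F_def)
  define a where "a = nmul N ?g + L F"
  have lim: "(\<lambda>n. p (\<Sum>i<n. a) / real n) \<longlonglongrightarrow> 0" using O0 unfolding class_O0_def by blast
  obtain n0 where n0: "\<forall>n\<ge>n0. norm (p (\<Sum>i<n. a) / real n - 0) < \<epsilon>"
    using LIMSEQ_D[OF lim eps] by blast
  define n where "n = max n0 1"
  have n1: "n \<ge> 1" by (simp add: n_def)
  have "norm (p (\<Sum>i<n. a) / real n - 0) < \<epsilon>" using n0 by (simp add: n_def)
  then have nlt: "p (nmul n a) / real n < \<epsilon>" by (simp add: nmul_def abs_if split: if_splits)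
  define b where "b = nmul n a"
  define m where "m = n * N"
  have m0: "m > 0" using n1 N by (simp add: m_def)
  have "n * 1 \<le> n * N" using N(1) by (intro mult_le_mono2) simp
  then have nm: "real n \<le> real m" unfolding m_def by (metis mult_1_right of_nat_le_iff)
  define d where "d = ((0::'a), (\<lambda>h. if h = b \<and> b \<noteq> 0 then 1 / of_nat m else (0::rat)))"
  have dsupp: "{h. snd d h \<noteq> 0} \<subseteq> {b}" by (auto simp: d_def split: if_splits)
  have dc: "d \<in> carrier G0"
    unfolding G0_carrier using dsupp by (auto intro: finite_subset simp: d_def)
  define y where "y = x \<otimes>\<^bsub>G0\<^esub> inv\<^bsub>G0\<^esub> d"
  have yc: "y \<in> carrier G0" using x dc by (simp add: y_def)
  have yeq: "y = (?g, \<lambda>h. ?f h + - snd d h)" using dc by (simp add: y_def G0_inv G0_mult d_def)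
  define D where "D = (\<lambda>h. if h = b \<and> b \<noteq> 0 then (1::rat) else 0)"
  have ivD: "intv D" by (simp add: intv_def D_def)
  have finD: "finite {h. D h \<noteq> 0}" by (rule finite_subset[of _ "{b}"]) (auto simp: D_def)
  have LD: "L D = b"
  proof (cases "b = 0")
    case True then show ?thesis by (simp add: D_def)
  next
    case False
    have "L D = (\<Sum>h\<in>{b}. zmul \<lfloor>D h\<rfloor> h)" by (rule L_superset) (auto simp: D_def)
    then show ?thesis using False by (simp add: D_def)
  qed
  have fun_eq: "(\<lambda>h. of_nat m * (?f h + - snd d h)) = (\<lambda>h. of_nat n * F h + - D h)"
  proof
    fix h show "of_nat m * (?f h + - snd d h) = of_nat n * F h + - D h"
      using m0 by (simp add: d_def D_def F_def m_def algebra_simps)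
  qed
  have powy: "y [^]\<^bsub>G0\<^esub> m = (nmul m ?g, \<lambda>h. of_nat n * F h + - D h)"
    using fun_eq by (simp add: G0_pow yeq)
  have finnF: "finite {h. of_nat n * F h \<noteq> 0}" by (rule finite_subset[OF _ finF]) auto
  have ivnF: "intv (\<lambda>h. of_nat n * F h)" using ivF by (simp add: intv_def Ints_mult)
  have "L (\<lambda>h. of_nat n * F h + - D h) = L (\<lambda>h. of_nat n * F h) + L (\<lambda>h. - D h)"
    using finnF finD ivnF by (intro L_add) auto
  also have "\<dots> = nmul n (L F) - b" using L_nat[OF finF ivF] L_uminus[OF ivD] LD by simp
  finally have Leq: "L (\<lambda>h. of_nat n * F h + - D h) = nmul n (L F) - b" .
  have gm: "nmul m ?g = - L (\<lambda>h. of_nat n * F h + - D h)"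
    unfolding Leq b_def a_def m_def by (simp add: nmul_plus nmul_mult)
  have ivs: "intv (\<lambda>h. of_nat n * F h + - D h)" using ivnF ivD by (simp add: intv_def)
  have yK: "y [^]\<^bsub>G0\<^esub> m \<in> K"
    unfolding K_def using G0.nat_pow_closed[OF yc, of m] powy gm ivs by simp
  define t where "t = K #>\<^bsub>G0\<^esub> y"
  have tc: "t \<in> carrier HH" unfolding t_def HH_carrier using yc by blast
  have tpow: "t [^]\<^bsub>HH\<^esub> m = \<one>\<^bsub>HH\<^esub>"
    unfolding t_def using Kn.FactGroup_pow[OF yc, of m] K_coset_K[OF yK]
    by (simp add: r_coset_def)
  have invy: "inv\<^bsub>G0\<^esub> y = inv\<^bsub>G0\<^esub> x \<otimes>\<^bsub>G0\<^esub> d"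
    unfolding y_def using x dc by (simp add: G0.inv_mult)
  have xy: "x \<otimes>\<^bsub>G0\<^esub> inv\<^bsub>G0\<^esub> y = d"
    unfolding invy using x dc by (simp add: G0.m_assoc[symmetric])
  have Ct: "C \<otimes>\<^bsub>HH\<^esub> inv\<^bsub>HH\<^esub> t = K #>\<^bsub>G0\<^esub> d"
    unfolding t_def x(2) HH_inv[OF yc] HH_mult[OF x(1) G0.inv_closed[OF yc]] xy ..
  have "q (K #>\<^bsub>G0\<^esub> d) \<le> Q0 d" by (rule q_le[OF G0.rcos_self[OF dc subgroup_K]])
  also have "\<dots> = p 0 + (\<Sum>h\<in>{b}. real_of_rat \<bar>snd d h\<bar> * p h)"
  proof -
    have "fst d = 0" by (simp add: d_def)
    then show ?thesis using Q0_superset[of "{b}" d] dsupp by simp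
  qed
  also have "\<dots> = real_of_rat \<bar>snd d b\<bar> * p b" by (simp add: value_basic[OF pv])
  also have "\<dots> \<le> p b / real n"
  proof (cases "b = 0")
    case True then show ?thesis by (simp add: d_def value_basic[OF pv])
  next
    case False
    have "real_of_rat \<bar>snd d b\<bar> = 1 / real m" using False m0 by (simp add: d_def of_rat_divide)
    moreover have "1 / real m \<le> 1 / real n" using nm n1 by (simp add: frac_le)
    ultimately have "real_of_rat \<bar>snd d b\<bar> * p b \<le> (1 / real n) * p b"
      using value_basic(1)[OF pv, of b] by (metis mult_right_mono)
    then show ?thesis by simp
  qed
  also have "\<dots> < \<epsilon>" using nlt by (simp add: b_def)
  finally have "q (C \<otimes>\<^bsub>HH\<^esub> inv\<^bsub>HH\<^esub> t) < \<epsilon>" unfolding Ct .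
  moreover have "\<exists>n::nat. n \<ge> 1 \<and> t [^]\<^bsub>HH\<^esub> n = \<one>\<^bsub>HH\<^esub>" using tpow m0
    by (intro exI[of _ m]) simp
  ultimately show "\<exists>t\<in>carrier HH. (\<exists>n::nat. n \<ge> 1 \<and> t [^]\<^bsub>HH\<^esub> n = \<one>\<^bsub>HH\<^esub>) \<and>
      q (C \<otimes>\<^bsub>HH\<^esub> inv\<^bsub>HH\<^esub> t) < \<epsilon>" using tc by blast
qed

end

lemma transport:
  fixes H :: "('x,'m) monoid_scheme" and phi :: "'x \<Rightarrow> 'y" and p :: "'a::ab_group_add \<Rightarrow> real"
  assumes enl: "is_enlargement p H q e" and td: "torsion_dense H q"
    and inj: "inj_on phi (carrier H)"
  shows "\<exists>(H'::'y monoid) q' e'. is_enlargement p H' q' e' \<and> torsion_dense H' q'"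
proof -
  interpret H: comm_group H using enl by (simp add: is_enlargement_def)
  have gv: "is_group_value H q" and ec: "\<And>x. e x \<in> carrier H" and ie: "inj e"
    and eh: "\<And>x y. e (x + y) = e x \<otimes>\<^bsub>H\<^esub> e y" and eq: "\<And>x. q (e x) = p x"
    using enl by (auto simp: is_enlargement_def)
  define psi where "psi = inv_into (carrier H) phi"
  have psi: "\<And>x. x \<in> carrier H \<Longrightarrow> psi (phi x) = x" unfolding psi_def using inv_into_f_f[OF inj] by blast
  define H' where "H' = (\<lparr>carrier = phi ` carrier H, mult = (\<lambda>u v. phi (psi u \<otimes>\<^bsub>H\<^esub> psi v)),
      one = phi \<one>\<^bsub>H\<^esub>\<rparr> :: 'y monoid)"
  have car: "carrier H' = phi ` carrier H" by (simp add: H'_def)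
  have mul: "\<And>x y. x \<in> carrier H \<Longrightarrow> y \<in> carrier H \<Longrightarrow> phi x \<otimes>\<^bsub>H'\<^esub> phi y = phi (x \<otimes>\<^bsub>H\<^esub> y)"
    by (simp add: H'_def psi)
  have one: "\<one>\<^bsub>H'\<^esub> = phi \<one>\<^bsub>H\<^esub>" by (simp add: H'_def)
  have G': "comm_group H'"
  proof (rule comm_groupI)
    fix u v assume "u \<in> carrier H'" "v \<in> carrier H'"
    then obtain x y where "x \<in> carrier H" "y \<in> carrier H" "u = phi x" "v = phi y"
      unfolding car by blast
    then show "u \<otimes>\<^bsub>H'\<^esub> v \<in> carrier H'" "u \<otimes>\<^bsub>H'\<^esub> v = v \<otimes>\<^bsub>H'\<^esub> u"
      by (simp_all add: mul car H.m_comm)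
  next
    show "\<one>\<^bsub>H'\<^esub> \<in> carrier H'" by (simp add: one car)
  next
    fix u v w assume "u \<in> carrier H'" "v \<in> carrier H'" "w \<in> carrier H'"
    then obtain x y z where "x \<in> carrier H" "y \<in> carrier H" "z \<in> carrier H"
      "u = phi x" "v = phi y" "w = phi z"
      unfolding car by blast
    then show "u \<otimes>\<^bsub>H'\<^esub> v \<otimes>\<^bsub>H'\<^esub> w = u \<otimes>\<^bsub>H'\<^esub> (v \<otimes>\<^bsub>H'\<^esub> w)"
      by (simp add: mul H.m_assoc)
  next
    fix u assume "u \<in> carrier H'"
    then obtain x where x: "x \<in> carrier H" "u = phi x" unfolding car by blast
    then show "\<one>\<^bsub>H'\<^esub> \<otimes>\<^bsub>H'\<^esub> u = u" by (simp add: one mul)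
    show "\<exists>v\<in>carrier H'. v \<otimes>\<^bsub>H'\<^esub> u = \<one>\<^bsub>H'\<^esub>"
      using x by (intro bexI[of _ "phi (inv\<^bsub>H\<^esub> x)"]) (simp_all add: mul one car)
  qed
  interpret H': comm_group H' by (rule G')
  have inv': "\<And>x. x \<in> carrier H \<Longrightarrow> inv\<^bsub>H'\<^esub> (phi x) = phi (inv\<^bsub>H\<^esub> x)"
    by (rule H'.inv_equality) (simp_all add: mul one car)
  have pow': "\<And>x n. x \<in> carrier H \<Longrightarrow> (phi x) [^]\<^bsub>H'\<^esub> (n::nat) = phi (x [^]\<^bsub>H\<^esub> n)"
  proof -
    fix x and n :: nat assume x: "x \<in> carrier H"
    show "(phi x) [^]\<^bsub>H'\<^esub> (n::nat) = phi (x [^]\<^bsub>H\<^esub> n)"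
      by (induction n) (simp_all add: one mul x)
  qed
  define q' where "q' = (\<lambda>u. q (psi u))"
  define e' where "e' = (\<lambda>x. phi (e x))"
  have q'phi: "\<And>x. x \<in> carrier H \<Longrightarrow> q' (phi x) = q x" by (simp add: q'_def psi)
  have "is_group_value H' q'"
    unfolding is_group_value_def car
  proof (intro conjI ballI)
    fix u v assume "u \<in> phi ` carrier H" "v \<in> phi ` carrier H"
    then obtain x y where x: "x \<in> carrier H" "u = phi x" and y: "y \<in> carrier H" "v = phi y" by blast
    show "q' (u \<otimes>\<^bsub>H'\<^esub> v) \<le> q' u + q' v"
      using gv x y by (simp add: mul q'phi is_group_value_def)
  next
    fix u assume "u \<in> phi ` carrier H"
    then obtain x where x: "x \<in> carrier H" "u = phi x" by blast
    show "0 \<le> q' u" using gv x by (simp add: q'phi is_group_value_def)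
    show "q' (inv\<^bsub>H'\<^esub> u) = q' u" using gv x by (simp add: q'phi inv' is_group_value_def)
    have "phi x = phi \<one>\<^bsub>H\<^esub> \<longleftrightarrow> x = \<one>\<^bsub>H\<^esub>" using inj x by (meson H.one_closed inj_on_eq_iff)
    then show "(q' u = 0) = (u = \<one>\<^bsub>H'\<^esub>)" using gv x by (simp add: q'phi one is_group_value_def)
  qed
  moreover have "inj e'"
  proof -
    have "inj_on phi (range e)" by (rule inj_on_subset[OF inj]) (auto simp: ec)
    then show ?thesis unfolding e'_def using ie comp_inj_on[of e UNIV phi] by (simp add: o_def)
  qed
  ultimately have "is_enlargement p H' q' e'"
    unfolding is_enlargement_def using G' ec
    by (auto simp: e'_def car eh mul q'phi eq)
  moreover have "torsion_dense H' q'"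
    unfolding torsion_dense_def car
  proof (intro ballI allI impI)
    fix u and \<epsilon> :: real assume u: "u \<in> phi ` carrier H" and eps: "\<epsilon> > 0"
    then obtain x where x: "x \<in> carrier H" "u = phi x" by blast
    obtain t n where t: "t \<in> carrier H" "n \<ge> 1" "t [^]\<^bsub>H\<^esub> (n::nat) = \<one>\<^bsub>H\<^esub>"
      "q (x \<otimes>\<^bsub>H\<^esub> inv\<^bsub>H\<^esub> t) < \<epsilon>"
      using td x eps unfolding torsion_dense_def by blast
    have "phi t [^]\<^bsub>H'\<^esub> n = \<one>\<^bsub>H'\<^esub>" using t pow'[OF t(1), of n] by (simp add: one)
    moreover have "q' (u \<otimes>\<^bsub>H'\<^esub> inv\<^bsub>H'\<^esub> phi t) < \<epsilon>"
      using t x by (simp add: inv' mul q'phi)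
    ultimately show "\<exists>t\<in>phi ` carrier H. (\<exists>n::nat. n \<ge> 1 \<and> t [^]\<^bsub>H'\<^esub> n = \<one>\<^bsub>H'\<^esub>) \<and>
        q' (u \<otimes>\<^bsub>H'\<^esub> inv\<^bsub>H'\<^esub> t) < \<epsilon>" using t by blast
  qed
  ultimately show ?thesis by blast
qed

lemma finite_case:
  fixes p :: "'a::ab_group_add \<Rightarrow> real"
  assumes pv: "is_value p" and fin: "finite (UNIV :: 'a set)"
  shows "\<exists>(H::'a set monoid) q e. is_enlargement p H q e \<and> torsion_dense H q"
proof -
  define Gm where "Gm = (\<lparr>carrier = UNIV, mult = (+), one = 0\<rparr> :: 'a monoid)"
  have cg: "comm_group Gm"
  proof (rule comm_groupI)
    fix x :: 'a
    show "\<exists>y\<in>carrier Gm. y \<otimes>\<^bsub>Gm\<^esub> x = \<one>\<^bsub>Gm\<^esub>" by (intro bexI[of _ "- x"]) (simp_all add: Gm_def)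
  qed (simp_all add: Gm_def add.assoc add.commute)
  interpret Gm: comm_group Gm by (rule cg)
  have inv: "\<And>x. inv\<^bsub>Gm\<^esub> x = - x" by (rule Gm.inv_equality) (simp_all add: Gm_def)
  have enl: "is_enlargement p Gm p id"
    unfolding is_enlargement_def is_group_value_def inv
    using cg value_basic[OF pv] by (auto simp: Gm_def)
  have "finite (carrier Gm)" using fin by (simp add: Gm_def)
  then have ord: "order Gm > 0" by (simp add: Gm.order_gt_0_iff_finite)
  have td: "torsion_dense Gm p"
    unfolding torsion_dense_def
  proof (intro ballI allI impI)
    fix x and \<epsilon> :: real assume x: "x \<in> carrier Gm" and eps: "\<epsilon> > 0"
    have "x [^]\<^bsub>Gm\<^esub> order Gm = \<one>\<^bsub>Gm\<^esub>" by (rule Gm.pow_order_eq_1[OF x])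
    moreover have "p (x \<otimes>\<^bsub>Gm\<^esub> inv\<^bsub>Gm\<^esub> x) < \<epsilon>" unfolding inv using eps
      by (simp add: Gm_def value_basic(2)[OF pv])
    ultimately show "\<exists>t\<in>carrier Gm. (\<exists>n::nat. n \<ge> 1 \<and> t [^]\<^bsub>Gm\<^esub> n = \<one>\<^bsub>Gm\<^esub>) \<and>
        p (x \<otimes>\<^bsub>Gm\<^esub> inv\<^bsub>Gm\<^esub> t) < \<epsilon>" using x ord
      by (intro bexI[of _ x]) (auto intro!: exI[of _ "order Gm"])
  qed
  show ?thesis by (rule transport[OF enl td, of "\<lambda>x. {x}"]) (simp add: inj_on_def)
qed

lemma inj_pair_nat:
  assumes "\<not> finite (UNIV::'a set)"
  shows "\<exists>f::('a \<times> nat \<Rightarrow> 'a). inj f"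
proof -
  note a = assms
  have 1: "(card_of (UNIV::nat set), card_of (UNIV::'a set)) \<in> ordLeq"
    using a infinite_iff_card_of_nat by blast
  have "(card_of ((UNIV::'a set) \<times> (UNIV::nat set)), card_of (UNIV::'a set)) \<in> ordIso"
    using card_of_Times_infinite[OF a _ 1] by simp
  then have "(card_of (UNIV::('a \<times> nat) set), card_of (UNIV::'a set)) \<in> ordLeq"
    using ordIso_iff_ordLeq by auto
  then show ?thesis using card_of_ordLeq[of "UNIV::('a \<times> nat) set" "UNIV::'a set"] by auto
qed

lemma infinite_case:
  fixes p :: "'a::ab_group_add \<Rightarrow> real"
  assumes pv: "is_value p" and O0: "class_O0 p" and inf: "\<not> finite (UNIV :: 'a set)"
  shows "\<exists>(H::'a set monoid) q e. is_enlargement p H q e \<and> torsion_dense H q"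
proof -
  interpret vg p by unfold_locales (rule pv)
  obtain f :: "'a \<times> nat \<Rightarrow> 'a" where f: "inj f" using inj_pair_nat[OF inf] by blast
  define enc where "enc = (\<lambda>x::'a \<times> ('a \<Rightarrow> rat).
     insert (f (fst x, 0)) (range (\<lambda>h. f (h, Suc (to_nat (snd x h))))))"
  have inj_enc: "inj enc"
  proof (rule injI)
    fix x y assume e: "enc x = enc y"
    have "f (fst x, 0) \<in> enc x" by (simp add: enc_def)
    then have "f (fst x, 0) \<in> enc y" using e by simp
    then have 1: "fst x = fst y" using injD[OF f] by (auto simp: enc_def)
    have "snd x h = snd y h" for h
    proof -
      have "f (h, Suc (to_nat (snd x h))) \<in> enc x" by (simp add: enc_def)
      then have "f (h, Suc (to_nat (snd x h))) \<in> enc y" using e by simp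
      moreover have "\<And>a b c d. f (a,b) = f (c,d) \<longleftrightarrow> a = c \<and> b = d" using f by (auto dest: injD)
      ultimately show ?thesis by (auto simp: enc_def)
    qed
    then show "x = y" using 1 by (simp add: prod_eq_iff fun_eq_iff)
  qed
  define phi where "phi = (\<lambda>C. enc (SOME x. x \<in> C))"
  have "inj_on phi (carrier HH)"
  proof (rule inj_onI)
    fix C D assume C: "C \<in> carrier HH" and D: "D \<in> carrier HH" and eq: "phi C = phi D"
    obtain x where x: "x \<in> carrier G0" "C = K #>\<^bsub>G0\<^esub> x" using C HH_carrier by blast
    obtain y where y: "y \<in> carrier G0" "D = K #>\<^bsub>G0\<^esub> y" using D HH_carrier by blast
    have sC: "(SOME z. z \<in> C) \<in> C" using G0.rcos_self[OF x(1) subgroup_K] x(2) by (metis someI_ex)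
    have sD: "(SOME z. z \<in> D) \<in> D" using G0.rcos_self[OF y(1) subgroup_K] y(2) by (metis someI_ex)
    have same: "(SOME z. z \<in> C) = (SOME z. z \<in> D)" using eq injD[OF inj_enc] by (simp add: phi_def)
    have "C = K #>\<^bsub>G0\<^esub> (SOME z. z \<in> C)"
      using G0.repr_independence[OF _ x(1) subgroup_K] sC x(2) by simp
    also have "\<dots> = D"
      using G0.repr_independence[OF _ y(1) subgroup_K] sD y(2) same by simp
    finally show "C = D" .
  qed
  then show ?thesis using transport[OF is_enl torsion_HH[OF O0]] by blast
qed

lemma backward:
  fixes p :: "'a::ab_group_add \<Rightarrow> real" and H :: "('b, 'c) monoid_scheme"
  assumes pv: "is_value p" and enl: "is_enlargement p H q e" and td: "torsion_dense H q"
  shows "class_O0 p"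
proof -
  interpret H: comm_group H using enl by (simp add: is_enlargement_def)
  have gv: "is_group_value H q" and ec: "\<And>x. e x \<in> carrier H"
    and eh: "\<And>x y. e (x + y) = e x \<otimes>\<^bsub>H\<^esub> e y" and eq: "\<And>x. q (e x) = p x"
    using enl by (auto simp: is_enlargement_def)
  have qnn: "\<And>x. x \<in> carrier H \<Longrightarrow> 0 \<le> q x" using gv by (simp add: is_group_value_def)
  have qm: "\<And>x y. x \<in> carrier H \<Longrightarrow> y \<in> carrier H \<Longrightarrow> q (x \<otimes>\<^bsub>H\<^esub> y) \<le> q x + q y"
    using gv by (simp add: is_group_value_def)
  have e0: "e 0 = \<one>\<^bsub>H\<^esub>"
    using gv eq[of 0] ec[of 0] value_basic(2)[OF pv] by (simp add: is_group_value_def)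
  have epow: "e (\<Sum>i<n. a) = e a [^]\<^bsub>H\<^esub> n" for a and n :: nat
    by (induction n) (simp_all add: e0 eh)
  have qpow: "\<And>x n. x \<in> carrier H \<Longrightarrow> q (x [^]\<^bsub>H\<^esub> (n::nat)) \<le> real n * q x"
  proof -
    fix x and n :: nat assume x: "x \<in> carrier H"
    show "q (x [^]\<^bsub>H\<^esub> n) \<le> real n * q x"
    proof (induction n)
      case 0
      have "q \<one>\<^bsub>H\<^esub> = 0" using gv H.one_closed unfolding is_group_value_def by blast
      then show ?case by simp
    next
      case (Suc n)
      have "q (x [^]\<^bsub>H\<^esub> Suc n) \<le> q (x [^]\<^bsub>H\<^esub> n) + q x" using qm x by simp
      then show ?case using Suc by (simp add: algebra_simps)
    qed
  qed
  show ?thesis unfolding class_O0_def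
  proof (intro conjI allI pv LIMSEQ_I)
    fix a :: 'a and \<epsilon> :: real assume eps: "\<epsilon> > 0"
    obtain t m where t: "t \<in> carrier H" "m \<ge> 1" "t [^]\<^bsub>H\<^esub> (m::nat) = \<one>\<^bsub>H\<^esub>"
      "q (e a \<otimes>\<^bsub>H\<^esub> inv\<^bsub>H\<^esub> t) < \<epsilon> / 2"
      using td ec[of a] eps unfolding torsion_dense_def by (meson half_gt_zero)
    define y where "y = e a \<otimes>\<^bsub>H\<^esub> inv\<^bsub>H\<^esub> t"
    have yc: "y \<in> carrier H" using t ec by (simp add: y_def)
    have ea: "e a = y \<otimes>\<^bsub>H\<^esub> t" using t ec by (simp add: y_def H.m_assoc)
    define M where "M = real m * q t"
    have M0: "M \<ge> 0" using qnn[OF t(1)] by (simp add: M_def)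
    have bound: "p (\<Sum>i<n. a) \<le> real n * (\<epsilon> / 2) + M" for n
    proof -
      have tn: "t [^]\<^bsub>H\<^esub> n = t [^]\<^bsub>H\<^esub> (n mod m)"
      proof -
        have "t [^]\<^bsub>H\<^esub> n = t [^]\<^bsub>H\<^esub> (m * (n div m) + n mod m)" by simp
        also have "\<dots> = (t [^]\<^bsub>H\<^esub> m) [^]\<^bsub>H\<^esub> (n div m) \<otimes>\<^bsub>H\<^esub> t [^]\<^bsub>H\<^esub> (n mod m)"
          using t(1) by (simp add: H.nat_pow_mult H.nat_pow_pow)
        finally show ?thesis using t by simp
      qed
      have "p (\<Sum>i<n. a) = q (e a [^]\<^bsub>H\<^esub> n)" using eq epow by metis
      also have "\<dots> = q (y [^]\<^bsub>H\<^esub> n \<otimes>\<^bsub>H\<^esub> t [^]\<^bsub>H\<^esub> (n mod m))"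
        using ea yc t(1) tn by (simp add: H.pow_mult_distrib H.m_comm)
      also have "\<dots> \<le> q (y [^]\<^bsub>H\<^esub> n) + q (t [^]\<^bsub>H\<^esub> (n mod m))" using qm yc t(1) by simp
      also have "\<dots> \<le> real n * q y + real (n mod m) * q t" using qpow yc t(1) by (simp add: add_mono)
      also have "\<dots> \<le> real n * (\<epsilon> / 2) + M"
      proof (rule add_mono)
        show "real n * q y \<le> real n * (\<epsilon> / 2)" using t(4) unfolding y_def[symmetric]
          by (intro mult_left_mono) auto
        have "n mod m \<le> m" using t(2) by simp
        then show "real (n mod m) * q t \<le> M" unfolding M_def using qnn[OF t(1)]
          by (simp add: mult_right_mono)
      qed
      finally show ?thesis .
    qed
    obtain N :: nat where N: "real N > 2 * M / \<epsilon>" using reals_Archimedean2 by blast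
    show "\<exists>no. \<forall>n\<ge>no. norm (p (\<Sum>i<n. a) / real n - 0) < \<epsilon>"
    proof (intro exI allI impI)
      fix n assume n: "n \<ge> Suc N"
      then have npos: "real n > 0" by simp
      have nM: "M / real n < \<epsilon> / 2"
      proof -
        have "2 * M / \<epsilon> < real n" using N n by linarith
        then have "2 * M < real n * \<epsilon>" using eps by (simp add: field_simps)
        then show ?thesis using npos by (simp add: field_simps)
      qed
      have "p (\<Sum>i<n. a) / real n \<le> (real n * (\<epsilon> / 2) + M) / real n"
        using bound[of n] npos by (simp add: divide_right_mono)
      also have "\<dots> = \<epsilon> / 2 + M / real n" using npos by (simp add: field_simps)
      finally have "p (\<Sum>i<n. a) / real n < \<epsilon>" using nM by linarith
      moreover have "0 \<le> p (\<Sum>i<n. a) / real n" using value_basic(1)[OF pv] by simp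
      ultimately show "norm (p (\<Sum>i<n. a) / real n - 0) < \<epsilon>" by simp
    qed
  qed
qed

theorem theorem2p12:
  fixes p :: "'a::ab_group_add \<Rightarrow> real"
  assumes "is_value p"
  shows "(class_O0 p \<longleftrightarrow>
            (\<exists>(H :: 'a set monoid) q e. is_enlargement p H q e \<and> torsion_dense H q))
       \<and> ((\<exists>(H :: ('b, 'c) monoid_scheme) q e. is_enlargement p H q e \<and> torsion_dense H q)
            \<longrightarrow> class_O0 p)"
proof (intro conjI iffI impI)
  assume O0: "class_O0 p"
  show "\<exists>(H :: 'a set monoid) q e. is_enlargement p H q e \<and> torsion_dense H q"
  proof (cases "finite (UNIV :: 'a set)")
    case True then show ?thesis by (rule finite_case[OF assms])
  next
    case False then show ?thesis by (rule infinite_case[OF assms O0])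
  qed
next
  assume "\<exists>(H :: 'a set monoid) q e. is_enlargement p H q e \<and> torsion_dense H q"
  then show "class_O0 p" using backward[OF assms] by blast
next
  assume "\<exists>(H :: ('b, 'c) monoid_scheme) q e. is_enlargement p H q e \<and> torsion_dense H q"
  then show "class_O0 p" using backward[OF assms] by blast
qed

end
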